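(* Let $T:\mathbb{R}^n\to\mathbb{R}^n$ be a continuous monotone operator, let $X\subset\mathbb{R}^n$ be nonempty, closed and convex, and let $X^*$ be the solution set of VI$(T,X)$. Consider the two conditions: (WS1) there exists $\rho>0$ such that for all $x^*\in X^*$ and all $x\in X$: $\langle T(x^* ),x-x^*\rangle\ge\rho\,\mathrm{dist}(x,X^* )$; (WS2) there exists $\rho>0$ such that for all $x^*\in X^*$ and all $z\in\mathbb{T}_X(x^* )\cap\mathbb{N}_{X^*}(x^* )$: $\langle T(x^* ),z\rangle\ge\rho\|z\|$. Then: (i) (WS1) implies (WS2) with the same $\rho$. (ii) If $T$ is constant on $X^*$, then (WS2) implies (WS1) with the same $\rho$.
   Context: VI$(T,X)$: find $x^*\in X$ with $\langle T(x^* ),x-x^*\rangle\ge0$ for all $x\in X$; $X^*$ denotes its solution set. $\mathrm{dist}(x,C)=\inf_{y\in C}\|x-y\|$ (Euclidean norm). For a set $C$ and $x\in C$, the normal cone is $\mathbb{N}_C(x)=\{v:\langle v,y-x\rangle\le0\ \forall y\in C\}$, and the tangent cone is $\mathbb{T}_C(x)=\{d:\exists t_k>0,\ d^k\to d \text{ with } x+t_kd^k\in C\ \forall k\}$. Monotone means $\langle T(y)-T(x),y-x\rangle\ge0$ for all $x,y$. *)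

theory Defs
  imports "HOL-Analysis.Analysis"
begin

definition VI_sol :: "('a::real_inner \<Rightarrow> 'a) \<Rightarrow> 'a set \<Rightarrow> 'a set" where
  "VI_sol T X = {xs \<in> X. \<forall>x\<in>X. inner (T xs) (x - xs) \<ge> 0}"

definition normal_cone :: "'a::real_inner set \<Rightarrow> 'a \<Rightarrow> 'a set" where
  "normal_cone C x = {v. \<forall>y\<in>C. inner v (y - x) \<le> 0}"

definition tangent_cone :: "'a::real_normed_vector set \<Rightarrow> 'a \<Rightarrow> 'a set" where
  "tangent_cone C x = {d. \<exists>t dk. (\<forall>k. t k > (0::real)) \<and> dk \<longlonglongrightarrow> d
                              \<and> (\<forall>k. x + t k *\<^sub>R dk k \<in> C)}"

definition monotone_op :: "('a::real_inner \<Rightarrow> 'a) \<Rightarrow> bool" where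
  "monotone_op T \<longleftrightarrow> (\<forall>x y. inner (T y - T x) (y - x) \<ge> 0)"

definition WS1 :: "('a::real_inner \<Rightarrow> 'a) \<Rightarrow> 'a set \<Rightarrow> real \<Rightarrow> bool" where
  "WS1 T X \<rho> \<longleftrightarrow> (\<forall>xs\<in>VI_sol T X. \<forall>x\<in>X.
      inner (T xs) (x - xs) \<ge> \<rho> * infdist x (VI_sol T X))"

definition WS2 :: "('a::real_inner \<Rightarrow> 'a) \<Rightarrow> 'a set \<Rightarrow> real \<Rightarrow> bool" where
  "WS2 T X \<rho> \<longleftrightarrow> (\<forall>xs\<in>VI_sol T X.
      \<forall>z\<in>tangent_cone X xs \<inter> normal_cone (VI_sol T X) xs.
      inner (T xs) z \<ge> \<rho> * norm z)"

end

theory Submission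
  imports Defs
begin

lemma minty:
  fixes T :: "real ^ 'n \<Rightarrow> real ^ 'n"
  assumes cont: "continuous_on UNIV T" and mono: "monotone_op T" and cX: "convex X"
  shows "VI_sol T X = {y \<in> X. \<forall>x\<in>X. inner (T x) (x - y) \<ge> 0}"
proof
  show "VI_sol T X \<subseteq> {y \<in> X. \<forall>x\<in>X. inner (T x) (x - y) \<ge> 0}"
  proof (rule subsetI, rule CollectI, rule conjI)
    fix y assume y: "y \<in> VI_sol T X"
    then show "y \<in> X" by (simp add: VI_sol_def)
    show "\<forall>x\<in>X. inner (T x) (x - y) \<ge> 0"
    proof
    fix x assume x: "x \<in> X"
    have "inner (T x - T y) (x - y) \<ge> 0" using mono by (simp add: monotone_op_def)
    moreover have "inner (T y) (x - y) \<ge> 0" using y x by (simp add: VI_sol_def)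
    ultimately show "inner (T x) (x - y) \<ge> 0" by (simp add: inner_diff_left)
    qed
  qed
next
  show "{y \<in> X. \<forall>x\<in>X. inner (T x) (x - y) \<ge> 0} \<subseteq> VI_sol T X"
  proof safe
    fix y assume yX: "y \<in> X" and M: "\<forall>x\<in>X. inner (T x) (x - y) \<ge> 0"
    have "inner (T y) (x - y) \<ge> 0" if x: "x \<in> X" for x
    proof -
      define f where "f t = inner (T (y + t *\<^sub>R (x - y))) (x - y)" for t :: real
      have pos: "f (1 / (real n + 1)) \<ge> 0" for n
      proof -
        define t where "t = 1 / (real n + 1)"
        have t0: "t > 0" "t \<le> 1" unfolding t_def by (auto simp: field_simps)
        have "y + t *\<^sub>R (x - y) = (1 - t) *\<^sub>R y + t *\<^sub>R x" by (simp add: algebra_simps)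
        also have "\<dots> \<in> X" using cX yX x t0 by (simp add: convex_def)
        finally have "inner (T (y + t *\<^sub>R (x - y))) ((y + t *\<^sub>R (x - y)) - y) \<ge> 0"
          using M by blast
        hence "t * f t \<ge> 0" by (simp add: f_def inner_scaleR_right)
        hence "f t \<ge> 0" using t0 by (simp add: zero_le_mult_iff)
        thus ?thesis by (simp add: t_def)
      qed
      have cT: "\<And>p. isCont T p" using cont by (simp add: continuous_on_eq_continuous_at)
      have cg: "isCont (\<lambda>t. T (y + t *\<^sub>R (x - y))) 0"
        using continuous_at_compose[OF _ cT, of 0 "\<lambda>t. y + t *\<^sub>R (x - y)"]
        by (simp add: o_def continuous_intros)
      have c: "isCont f 0" unfolding f_def
        using cg by (intro continuous_intros) auto
      have "(\<lambda>n. 1 / (real n + 1)) \<longlonglongrightarrow> 0" using LIMSEQ_inverse_real_of_nat by (simp add: inverse_eq_divide add.commute)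
      hence "(\<lambda>n. f (1 / (real n + 1))) \<longlonglongrightarrow> f 0" using c isCont_tendsto_compose by blast
      hence "f 0 \<ge> 0" using pos by (intro LIMSEQ_le_const) auto
      thus ?thesis by (simp add: f_def)
    qed
    thus "y \<in> VI_sol T X" using yX by (simp add: VI_sol_def)
  qed
qed

lemma sol_closed_convex:
  fixes T :: "real ^ 'n \<Rightarrow> real ^ 'n"
  assumes cont: "continuous_on UNIV T" and mono: "monotone_op T" and cX: "convex X" and clX: "closed X"
  shows "closed (VI_sol T X)" "convex (VI_sol T X)"
proof -
  have eq: "VI_sol T X = X \<inter> (\<Inter>x\<in>X. {y. inner (T x) y \<le> inner (T x) x})"
    unfolding minty[OF assms(1-3)] by (auto simp: inner_diff_right)
  show "closed (VI_sol T X)" unfolding eq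
    by (intro closed_Int clX closed_INT ballI closed_halfspace_le)
  show "convex (VI_sol T X)" unfolding eq
    by (intro convex_Int cX convex_INT ballI convex_halfspace_le)
qed

theorem proposition2p1:
  fixes T :: "real ^ 'n \<Rightarrow> real ^ 'n" and X :: "(real ^ 'n) set" and \<rho> :: real
  assumes "continuous_on UNIV T" and "monotone_op T"
    and "X \<noteq> {}" and "closed X" and "convex X"
    and "\<rho> > 0"
  shows "(WS1 T X \<rho> \<longrightarrow> WS2 T X \<rho>)
    \<and> ((\<forall>x\<in>VI_sol T X. \<forall>y\<in>VI_sol T X. T x = T y) \<longrightarrow> WS2 T X \<rho> \<longrightarrow> WS1 T X \<rho>)"
proof (intro conjI impI)
  note cc = sol_closed_convex[OF assms(1,2,5,4)]
  let ?S = "VI_sol T X"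
  assume W1: "WS1 T X \<rho>"
  show "WS2 T X \<rho>" unfolding WS2_def
  proof (intro ballI)
    fix xs z assume xs: "xs \<in> ?S" and z: "z \<in> tangent_cone X xs \<inter> normal_cone ?S xs"
    show "inner (T xs) z \<ge> \<rho> * norm z"
    proof (cases "z = 0")
      case True thus ?thesis by simp
    next
      case False
      hence nz: "norm z > 0" by simp
      from z obtain t dk where t: "\<forall>k. t k > (0::real)" and dk: "dk \<longlonglongrightarrow> z"
        and inX: "\<forall>k. xs + t k *\<^sub>R dk k \<in> X" by (auto simp: tangent_cone_def)
      have N: "\<forall>y\<in>?S. inner z (y - xs) \<le> 0" using z by (auto simp: normal_cone_def)
      have key: "inner (T xs) (dk k) \<ge> \<rho> * (inner (dk k) z / norm z)" for k
      proof -
        let ?p = "xs + t k *\<^sub>R dk k"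
        have lb: "infdist ?p ?S \<ge> t k * inner (dk k) z / norm z"
        proof -
          have "dist ?p y \<ge> t k * inner (dk k) z / norm z" if y: "y \<in> ?S" for y
          proof -
            have "inner (?p - y) z \<le> norm (?p - y) * norm z"
              by (rule norm_cauchy_schwarz)
            moreover have "inner (?p - y) z = t k * inner (dk k) z - inner z (y - xs)"
              by (simp add: inner_diff_left inner_add_left inner_diff_right inner_commute[of z y] inner_commute[of z xs])
            ultimately have "t k * inner (dk k) z \<le> norm (?p - y) * norm z" using N y by auto
            thus ?thesis using nz by (simp add: dist_norm pos_divide_le_eq)
          qed
          thus ?thesis using xs unfolding infdist_notempty[of ?S, OF ex_in_conv[THEN iffD1, OF exI, OF xs]]
            by (intro cINF_greatest) auto
        qed
        have "inner (T xs) (?p - xs) \<ge> \<rho> * infdist ?p ?S"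
          using W1 xs inX[rule_format, of k] unfolding WS1_def by blast
        hence "t k * inner (T xs) (dk k) \<ge> \<rho> * (t k * inner (dk k) z / norm z)"
          using lb assms(6) by (smt (verit) inner_scaleR_right add_diff_cancel_left' mult_left_mono)
        hence "t k * inner (T xs) (dk k) \<ge> t k * (\<rho> * (inner (dk k) z / norm z))" by (simp add: mult.left_commute)
        thus ?thesis using t by (meson mult_le_cancel_left_pos)
      qed
      have l1: "(\<lambda>k. inner (T xs) (dk k)) \<longlonglongrightarrow> inner (T xs) z" using dk by (intro tendsto_intros)
      have l2: "(\<lambda>k. \<rho> * (inner (dk k) z / norm z)) \<longlonglongrightarrow> \<rho> * (inner z z / norm z)"
        using dk nz by (intro tendsto_intros) auto
      have "\<rho> * (inner z z / norm z) \<le> inner (T xs) z"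
        by (rule LIMSEQ_le[OF l2 l1]) (use key in auto)
      moreover have "inner z z / norm z = norm z" using nz by (simp add: power2_norm_eq_inner[symmetric] power2_eq_square)
      ultimately show ?thesis by simp
    qed
  qed
next
  note cc = sol_closed_convex[OF assms(1,2,5,4)]
  let ?S = "VI_sol T X"
  assume const: "\<forall>x\<in>?S. \<forall>y\<in>?S. T x = T y" and W2: "WS2 T X \<rho>"
  show "WS1 T X \<rho>" unfolding WS1_def
  proof (intro ballI)
    fix xs x assume xs: "xs \<in> ?S" and x: "x \<in> X"
    have ne: "?S \<noteq> {}" using xs by auto
    define p where "p = closest_point ?S x"
    have pS: "p \<in> ?S" unfolding p_def by (rule closest_point_in_set[OF cc(1) ne])
    have dist: "infdist x ?S = norm (x - p)"
      unfolding infdist_eq_setdist setdist_closest_point[OF cc(1) ne] p_def by (simp add: dist_norm)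
    have pX: "p \<in> X" using pS by (simp add: VI_sol_def)
    have tc: "x - p \<in> tangent_cone X p" unfolding tangent_cone_def
      by (rule CollectI, rule exI[of _ "\<lambda>k. 1"], rule exI[of _ "\<lambda>k. x - p"]) (use x in auto)
    have nc: "x - p \<in> normal_cone ?S p" unfolding normal_cone_def p_def
      using closest_point_dot[OF cc(2) cc(1)] by auto
    have "inner (T p) (x - p) \<ge> \<rho> * norm (x - p)" using W2 pS tc nc by (simp add: WS2_def)
    moreover have "T p = T xs" using const pS xs by blast
    moreover have "inner (T xs) (p - xs) \<ge> 0" using xs pX by (simp add: VI_sol_def)
    moreover have "inner (T xs) (x - xs) = inner (T xs) (x - p) + inner (T xs) (p - xs)"
      by (simp add: inner_diff_right)
    ultimately show "inner (T xs) (x - xs) \<ge> \<rho> * infdist x ?S" using dist by simp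
  qed
qed

end
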